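(* Let $A\in\mathbb{R}^{m\times n}$, $b\in\mathbb{R}^m$ and $\delta\ge 0$, and assume $\{x\in\mathbb{R}^n:\|Ax-b\|\le\delta\}\neq\emptyset$. Let $\mathcal{S}^*$ be the set of globally optimal solutions of $$\min_{x,v\in\mathbb{R}^n}\{\langle e,e-v\rangle:\ \|Ax-b\|\le\delta,\ \langle v,|x|\rangle=0,\ 0\le v\le e\},$$ and for $\rho>0$ let $\mathcal{S}^*_\rho$ be the set of globally optimal solutions of $$\min_{x,v\in\mathbb{R}^n}\{\langle e,e-v\rangle+\rho\langle v,|x|\rangle:\ \|Ax-b\|\le\delta,\ 0\le v\le e\}.$$ Then there exists a constant $\bar\rho>0$ such that $\mathcal{S}^*=\mathcal{S}^*_\rho$ for all $\rho>\bar\rho$.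
   Context: $\|\cdot\|$ is the Euclidean norm, $e\in\mathbb{R}^n$ is the all-ones vector, $|x|$ is the componentwise absolute value, and vector inequalities are componentwise. *)

theory Defs
  imports "HOL-Analysis.Analysis"
begin

definition ones :: "real ^ 'n" where
  "ones = (\<chi> i. 1)"

definition vabs :: "real ^ 'n \<Rightarrow> real ^ 'n" where
  "vabs x = (\<chi> i. \<bar>x $ i\<bar>)"

definition feas_orig :: "real ^ 'n ^ 'm \<Rightarrow> real ^ 'm \<Rightarrow> real \<Rightarrow> ((real ^ 'n) \<times> (real ^ 'n)) set" where
  "feas_orig A b \<delta> = {(x, v). norm (A *v x - b) \<le> \<delta> \<and> v \<bullet> vabs x = 0 \<and>
       (\<forall>i. 0 \<le> v $ i \<and> v $ i \<le> 1)}"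

definition feas_pen :: "real ^ 'n ^ 'm \<Rightarrow> real ^ 'm \<Rightarrow> real \<Rightarrow> ((real ^ 'n) \<times> (real ^ 'n)) set" where
  "feas_pen A b \<delta> = {(x, v). norm (A *v x - b) \<le> \<delta> \<and> (\<forall>i. 0 \<le> v $ i \<and> v $ i \<le> 1)}"

definition obj_orig :: "(real ^ 'n) \<times> (real ^ 'n) \<Rightarrow> real" where
  "obj_orig p = ones \<bullet> (ones - snd p)"

definition obj_pen :: "real \<Rightarrow> (real ^ 'n) \<times> (real ^ 'n) \<Rightarrow> real" where
  "obj_pen \<rho> p = ones \<bullet> (ones - snd p) + \<rho> * (snd p \<bullet> vabs (fst p))"

definition global_opt :: "('a \<Rightarrow> real) \<Rightarrow> 'a set \<Rightarrow> 'a set" where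
  "global_opt f F = {p \<in> F. \<forall>q \<in> F. f p \<le> f q}"

definition S_star :: "real ^ 'n ^ 'm \<Rightarrow> real ^ 'm \<Rightarrow> real \<Rightarrow> ((real ^ 'n) \<times> (real ^ 'n)) set" where
  "S_star A b \<delta> = global_opt obj_orig (feas_orig A b \<delta>)"

definition S_star_rho :: "real ^ 'n ^ 'm \<Rightarrow> real ^ 'm \<Rightarrow> real \<Rightarrow> real \<Rightarrow> ((real ^ 'n) \<times> (real ^ 'n)) set" where
  "S_star_rho A b \<delta> \<rho> = global_opt (obj_pen \<rho>) (feas_pen A b \<delta>)"

end

theory Submission imports Defs begin

lemma sep_lemma:
  fixes A :: "real ^ 'n ^ 'm" and b :: "real ^ 'm" and T :: "'n set"
  assumes none: "\<not> (\<exists>y. norm (A *v y - b) \<le> \<delta> \<and> (\<forall>i. i \<notin> T \<longrightarrow> y $ i = 0))"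
  shows "\<exists>e>0. \<forall>x. norm (A *v x - b) \<le> \<delta> \<longrightarrow> (\<exists>i. i \<notin> T \<and> e \<le> \<bar>x $ i\<bar>)"
proof -
  let ?L = "{y :: real ^ 'n. \<forall>i. i \<notin> T \<longrightarrow> y $ i = 0}"
  have subL: "subspace ?L" unfolding subspace_def by auto
  have clM: "closed ((*v) A ` ?L)"
    by (rule closed_subspace, rule linear_subspace_image[OF matrix_vector_mul_linear subL])
  have dis: "cball b \<delta> \<inter> ((*v) A ` ?L) = {}"
  proof (rule ccontr)
    assume "cball b \<delta> \<inter> ((*v) A ` ?L) \<noteq> {}"
    then obtain y where y: "y \<in> ?L" "A *v y \<in> cball b \<delta>" by auto
    hence "norm (A *v y - b) \<le> \<delta>" by (simp add: dist_norm norm_minus_commute)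
    with y none show False by auto
  qed
  obtain d where d: "d > 0" "\<forall>u\<in>cball b \<delta>. \<forall>w\<in>(*v) A ` ?L. d \<le> dist u w"
    using separate_compact_closed[OF compact_cball clM dis] by blast
  obtain C where C: "C > 0" "\<And>z. norm (A *v z) \<le> C * norm z"
    using linear_bounded_pos[OF matrix_vector_mul_linear] by blast
  define e where "e = d / (2 * C * real CARD('n))"
  have cpos: "real CARD('n) > 0" by simp
  have epos: "e > 0" unfolding e_def using d C cpos by simp
  show ?thesis
  proof (intro exI[of _ e] conjI allI impI epos)
    fix x :: "real ^ 'n"
    assume xF: "norm (A *v x - b) \<le> \<delta>"
    show "\<exists>i. i \<notin> T \<and> e \<le> \<bar>x $ i\<bar>"
    proof (rule ccontr)
      assume H: "\<not> ?thesis"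
      define y :: "real ^ 'n" where "y = (\<chi> i. if i \<in> T then x $ i else 0)"
      have yL: "y \<in> ?L" unfolding y_def by simp
      have xK: "A *v x \<in> cball b \<delta>" using xF by (simp add: dist_norm norm_minus_commute)
      have "d \<le> dist (A *v x) (A *v y)" using d(2) xK yL by blast
      also have "\<dots> = norm (A *v (x - y))" by (simp add: dist_norm matrix_vector_mult_diff_distrib)
      also have "\<dots> \<le> C * norm (x - y)" by (rule C(2))
      also have "norm (x - y) \<le> (\<Sum>i\<in>UNIV. \<bar>(x - y) $ i\<bar>)" by (rule norm_le_l1_cart)
      also have "\<dots> \<le> (\<Sum>i\<in>(UNIV::'n set). e)"
      proof (rule sum_mono)
        fix i :: 'n
        show "\<bar>(x - y) $ i\<bar> \<le> e"
          using H epos unfolding y_def by (cases "i \<in> T") (auto simp: not_le intro: less_imp_le)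
      qed
      also have "\<dots> = real CARD('n) * e" by simp
      also have "\<dots> = d / (2 * C)" unfolding e_def using cpos C by (simp add: field_simps)
      finally have "d \<le> C * (d / (2 * C))" using C by (simp add: mult_left_mono)
      thus False using C d by (simp add: field_simps)
    qed
  qed
qed

definition nnz :: "real ^ 'n \<Rightarrow> nat" where "nnz x = card {i. x $ i \<noteq> 0}"

lemma eps_lemma:
  fixes A :: "real ^ 'n ^ 'm" and b :: "real ^ 'm" and \<delta> :: real
  defines "s \<equiv> (LEAST k. \<exists>x. norm (A *v x - b) \<le> \<delta> \<and> nnz x = k)"
  shows "\<exists>\<epsilon>>0. \<forall>x. norm (A *v x - b) \<le> \<delta> \<longrightarrow> s \<le> card {i. \<epsilon> \<le> \<bar>x $ i\<bar>}"
proof -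
  define Bad where "Bad = {T :: 'n set. \<not> (\<exists>y. norm (A *v y - b) \<le> \<delta> \<and> (\<forall>i. i \<notin> T \<longrightarrow> y $ i = 0))}"
  have "\<forall>T\<in>Bad. \<exists>e>0. \<forall>x. norm (A *v x - b) \<le> \<delta> \<longrightarrow> (\<exists>i. i \<notin> T \<and> e \<le> \<bar>x $ i\<bar>)"
    unfolding Bad_def using sep_lemma by blast
  then obtain ef where ef: "\<And>T. T \<in> Bad \<Longrightarrow> ef T > 0 \<and> (\<forall>x. norm (A *v x - b) \<le> \<delta> \<longrightarrow> (\<exists>i. i \<notin> T \<and> ef T \<le> \<bar>x $ i\<bar>))"
    by metis
  define \<epsilon> where "\<epsilon> = Min (insert 1 (ef ` Bad))"
  have fin: "finite (insert 1 (ef ` Bad))" by simp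
  have epos: "\<epsilon> > 0" unfolding \<epsilon>_def using fin ef by (subst Min_gr_iff) auto
  have ele: "\<And>T. T \<in> Bad \<Longrightarrow> \<epsilon> \<le> ef T" unfolding \<epsilon>_def using fin by (intro Min_le) auto
  show ?thesis
  proof (intro exI[of _ \<epsilon>] conjI allI impI epos)
    fix x :: "real ^ 'n" assume xF: "norm (A *v x - b) \<le> \<delta>"
    let ?T = "{i. \<epsilon> \<le> \<bar>x $ i\<bar>}"
    show "s \<le> card ?T"
    proof (rule ccontr)
      assume lt: "\<not> s \<le> card ?T"
      have "?T \<in> Bad"
      proof -
        { fix y :: "real ^ 'n" assume yF: "norm (A *v y - b) \<le> \<delta>" and ys: "\<forall>i. i \<notin> ?T \<longrightarrow> y $ i = 0"
          have "{i. y $ i \<noteq> 0} \<subseteq> ?T" using ys by blast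
          hence "nnz y \<le> card ?T" unfolding nnz_def by (intro card_mono) auto
          moreover have "s \<le> nnz y" unfolding s_def using yF by (intro Least_le) auto
          ultimately have False using lt by simp }
        thus ?thesis unfolding Bad_def by blast
      qed
      then obtain i where "i \<notin> ?T" "ef ?T \<le> \<bar>x $ i\<bar>" using ef xF by blast
      moreover have "\<epsilon> \<le> ef ?T" using ele \<open>?T \<in> Bad\<close> by blast
      ultimately show False by simp
    qed
  qed
qed

lemma obj_orig_eq: "obj_orig (x, v) = (\<Sum>i\<in>UNIV. 1 - v $ i)"
  by (simp add: obj_orig_def inner_vec_def ones_def)

lemma inner_vabs: "v \<bullet> vabs x = (\<Sum>i\<in>UNIV. v $ i * \<bar>x $ i\<bar>)"
  by (simp add: inner_vec_def vabs_def)

lemma obj_pen_eq: "obj_pen \<rho> (x, v) = (\<Sum>i\<in>UNIV. 1 - v $ i + \<rho> * (v $ i * \<bar>x $ i\<bar>))"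
  by (simp add: obj_pen_def inner_vec_def ones_def vabs_def sum.distrib sum_distrib_left)

lemma card_sum: "card {i. P i} = (\<Sum>i\<in>(UNIV::'n::finite set). if P i then 1 else (0::real))"
  by (simp add: sum.If_cases)

theorem theorem3p1:
  fixes A :: "real ^ 'n ^ 'm" and b :: "real ^ 'm" and \<delta> :: real
  assumes "\<delta> \<ge> 0"
    and "{x :: real ^ 'n. norm (A *v x - b) \<le> \<delta>} \<noteq> {}"
  shows "\<exists>\<rho>bar > 0. \<forall>\<rho> > \<rho>bar. S_star A b \<delta> = S_star_rho A b \<delta> \<rho>"
proof -
  define s where "s = (LEAST k. \<exists>x. norm (A *v x - b) \<le> \<delta> \<and> nnz x = k)"
  obtain \<epsilon> where ep: "\<epsilon> > 0" "\<And>x. norm (A *v x - b) \<le> \<delta> \<Longrightarrow> s \<le> card {i. \<epsilon> \<le> \<bar>x $ i\<bar>}"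
    using eps_lemma[of A b \<delta>] unfolding s_def by blast
  obtain x1 :: "real ^ 'n" where "norm (A *v x1 - b) \<le> \<delta>" using assms(2) by blast
  hence "\<exists>k x. norm (A *v x - b) \<le> \<delta> \<and> nnz x = k" by blast
  then obtain x0 where x0: "norm (A *v x0 - b) \<le> \<delta>" "nnz x0 = s"
    unfolding s_def using LeastI_ex[where P="\<lambda>k. \<exists>x. norm (A *v x - b) \<le> \<delta> \<and> nnz x = k"] by blast
  define v0 :: "real ^ 'n" where "v0 = (\<chi> i. if x0 $ i = 0 then 1 else 0)"
  have v0z: "v0 \<bullet> vabs x0 = 0" unfolding inner_vabs v0_def by (intro sum.neutral) auto
  have p0o: "(x0, v0) \<in> feas_orig A b \<delta>" using x0 v0z unfolding feas_orig_def v0_def by auto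
  have p0p: "(x0, v0) \<in> feas_pen A b \<delta>" using x0 unfolding feas_pen_def v0_def by auto
  have obj0: "obj_orig (x0, v0) = s"
  proof -
    have "obj_orig (x0, v0) = (\<Sum>i\<in>UNIV. if x0 $ i \<noteq> 0 then 1 else (0::real))"
      unfolding obj_orig_eq v0_def by (intro sum.cong) auto
    also have "\<dots> = nnz x0" unfolding nnz_def card_sum by simp
    finally show ?thesis using x0 by simp
  qed
  have obj0p: "obj_pen \<rho> (x0, v0) = s" for \<rho>
    using obj0 v0z unfolding obj_pen_def obj_orig_def by simp
  have lba: "s \<le> obj_orig (x, v)" if "(x, v) \<in> feas_orig A b \<delta>" for x v
  proof -
    have F: "norm (A *v x - b) \<le> \<delta>" "\<forall>i. 0 \<le> v $ i \<and> v $ i \<le> 1"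
      "(\<Sum>i\<in>UNIV. v $ i * \<bar>x $ i\<bar>) = 0"
      using that unfolding feas_orig_def inner_vabs by auto
    have z: "\<forall>i\<in>UNIV. v $ i * \<bar>x $ i\<bar> = 0"
      using F(3) F(2) by (subst sum_nonneg_eq_0_iff[symmetric]) auto
    have "s \<le> nnz x" unfolding s_def using F(1) by (intro Least_le) auto
    hence "real s \<le> nnz x" by simp
    also have "\<dots> = (\<Sum>i\<in>UNIV. if x $ i \<noteq> 0 then 1 else (0::real))" unfolding nnz_def card_sum ..
    also have "\<dots> \<le> (\<Sum>i\<in>UNIV. 1 - v $ i)"
    proof (rule sum_mono)
      fix i show "(if x $ i \<noteq> 0 then 1 else (0::real)) \<le> 1 - v $ i"
        using z F(2) by (metis UNIV_I diff_ge_0_iff_ge mult_eq_0_iff abs_eq_0 order.refl diff_zero)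
    qed
    finally show ?thesis unfolding obj_orig_eq .
  qed
  have main: "S_star A b \<delta> = S_star_rho A b \<delta> \<rho>" if rho: "\<rho> > 1 / \<epsilon>" for \<rho>
  proof -
    have rpos: "\<rho> > 0" using rho ep(1) by (smt (verit) divide_pos_pos)
    have re: "\<rho> * \<epsilon> > 1" using rho ep(1) by (simp add: field_simps)
    define ind where "ind x i = (if \<epsilon> \<le> \<bar>x $ i\<bar> then 1 else (0::real))" for x :: "real ^ 'n" and i
    have tge: "ind x i \<le> 1 - v $ i + \<rho> * (v $ i * \<bar>x $ i\<bar>)"
      if "0 \<le> v $ i" "v $ i \<le> 1" for x v i
    proof (cases "\<epsilon> \<le> \<bar>x $ i\<bar>")
      case True
      have "1 \<le> \<rho> * \<bar>x $ i\<bar>" using re True rpos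
        by (smt (verit) mult_left_mono)
      hence "v $ i * 1 \<le> v $ i * (\<rho> * \<bar>x $ i\<bar>)" using that by (intro mult_left_mono) auto
      thus ?thesis using True unfolding ind_def by (simp add: algebra_simps)
    next
      case False
      have "0 \<le> \<rho> * (v $ i * \<bar>x $ i\<bar>)" using rpos that by simp
      thus ?thesis using False that unfolding ind_def by simp
    qed
    have sind: "real s \<le> (\<Sum>i\<in>UNIV. ind x i)" if "norm (A *v x - b) \<le> \<delta>" for x
      using ep(2)[OF that] unfolding ind_def card_sum[symmetric] by simp
    have lbb: "s \<le> obj_pen \<rho> (x, v)" if "(x, v) \<in> feas_pen A b \<delta>" for x v
    proof -
      have F: "norm (A *v x - b) \<le> \<delta>" "\<forall>i. 0 \<le> v $ i \<and> v $ i \<le> 1"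
        using that unfolding feas_pen_def by auto
      have "real s \<le> (\<Sum>i\<in>UNIV. ind x i)" by (rule sind[OF F(1)])
      also have "\<dots> \<le> obj_pen \<rho> (x, v)" unfolding obj_pen_eq
        using tge F(2) by (intro sum_mono) auto
      finally show ?thesis .
    qed
    have eqc: "v \<bullet> vabs x = 0" if "(x, v) \<in> feas_pen A b \<delta>" "obj_pen \<rho> (x, v) = s" for x v
    proof -
      have F: "norm (A *v x - b) \<le> \<delta>" "\<forall>i. 0 \<le> v $ i \<and> v $ i \<le> 1"
        using that unfolding feas_pen_def by auto
      define t where "t i = 1 - v $ i + \<rho> * (v $ i * \<bar>x $ i\<bar>)" for i
      have st: "(\<Sum>i\<in>UNIV. t i) = s" using that(2) unfolding obj_pen_eq t_def .
      have "(\<Sum>i\<in>UNIV. t i - ind x i) = (\<Sum>i\<in>UNIV. t i) - (\<Sum>i\<in>UNIV. ind x i)"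
        by (simp add: sum_subtractf)
      also have "\<dots> \<le> 0" using st sind[OF F(1)] by simp
      finally have le0: "(\<Sum>i\<in>UNIV. t i - ind x i) \<le> 0" .
      have nn: "\<forall>i\<in>UNIV. 0 \<le> t i - ind x i" using tge F(2) unfolding t_def by auto
      have "(\<Sum>i\<in>UNIV. t i - ind x i) = 0" proof -
        have "0 \<le> (\<Sum>i\<in>UNIV. t i - ind x i)" using nn by (intro sum_nonneg) auto
        thus ?thesis using le0 by linarith
      qed
      hence z: "\<forall>i\<in>UNIV. t i - ind x i = 0" using nn by (subst sum_nonneg_eq_0_iff[symmetric]) auto
      have "v $ i * \<bar>x $ i\<bar> = 0" for i
      proof (cases "\<epsilon> \<le> \<bar>x $ i\<bar>")
        case True
        have "t i - ind x i = 0" using z by simp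
        hence e1: "- v $ i + \<rho> * (v $ i * \<bar>x $ i\<bar>) = 0" using True unfolding t_def ind_def by simp
        have "1 < \<rho> * \<bar>x $ i\<bar>" using re True rpos by (smt (verit) mult_left_mono)
        hence "v $ i * (\<rho> * \<bar>x $ i\<bar> - 1) = 0" using e1 by (simp add: algebra_simps)
        hence "v $ i = 0" using \<open>1 < \<rho> * \<bar>x $ i\<bar>\<close> by simp
        thus ?thesis by simp
      next
        case False
        have "t i - ind x i = 0" using z by simp
        hence e1: "1 - v $ i + \<rho> * (v $ i * \<bar>x $ i\<bar>) = 0" using False unfolding t_def ind_def by simp
        have "0 \<le> \<rho> * (v $ i * \<bar>x $ i\<bar>)" using rpos F(2) by simp
        hence "\<rho> * (v $ i * \<bar>x $ i\<bar>) = 0" using e1 F(2) by smt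
        thus ?thesis using rpos by simp
      qed
      thus ?thesis unfolding inner_vabs by (intro sum.neutral) auto
    qed
    show ?thesis
    proof (intro set_eqI iffI)
      fix p assume p: "p \<in> S_star A b \<delta>"
      obtain x v where pxv: "p = (x, v)" by fastforce
      have po: "(x, v) \<in> feas_orig A b \<delta>" "obj_orig (x, v) \<le> s"
        using p p0o obj0 unfolding pxv S_star_def global_opt_def by force+
      have z: "v \<bullet> vabs x = 0" using po(1) unfolding feas_orig_def by auto
      have pp: "(x, v) \<in> feas_pen A b \<delta>" using po(1) unfolding feas_orig_def feas_pen_def by auto
      have "obj_pen \<rho> (x, v) = obj_orig (x, v)" using z unfolding obj_pen_def obj_orig_def by simp
      hence "obj_pen \<rho> (x, v) \<le> obj_pen \<rho> q" if "q \<in> feas_pen A b \<delta>" for q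
        using lbb[of "fst q" "snd q"] that po(2) by auto
      thus "p \<in> S_star_rho A b \<delta> \<rho>" using pp unfolding pxv S_star_rho_def global_opt_def by auto
    next
      fix p assume p: "p \<in> S_star_rho A b \<delta> \<rho>"
      obtain x v where pxv: "p = (x, v)" by fastforce
      have pp: "(x, v) \<in> feas_pen A b \<delta>" "obj_pen \<rho> (x, v) \<le> s"
        using p p0p obj0p[of \<rho>] unfolding pxv S_star_rho_def global_opt_def by force+
      have es: "obj_pen \<rho> (x, v) = s" using pp lbb by force
      have z: "v \<bullet> vabs x = 0" by (rule eqc[OF pp(1) es])
      have po: "(x, v) \<in> feas_orig A b \<delta>" using pp(1) z unfolding feas_orig_def feas_pen_def by auto
      have "obj_orig (x, v) = s" using es z unfolding obj_pen_def obj_orig_def by simp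
      hence "obj_orig (x, v) \<le> obj_orig q" if "q \<in> feas_orig A b \<delta>" for q
        using lba[of "fst q" "snd q"] that by auto
      thus "p \<in> S_star A b \<delta>" using po unfolding pxv S_star_def global_opt_def by auto
    qed
  qed
  show ?thesis using main ep(1) by (intro exI[of _ "1/\<epsilon>"]) auto
qed
end
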